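(* Let $X\in\mathbb{R}^{d\times d}$ be positive definite with eigenvalues $\gamma_1\geqslant\dots\geqslant\gamma_d$ satisfying $\lambda\leqslant\gamma_i\leqslant\Lambda$, where $0<\lambda\leqslant\Lambda$. Set $\mu=\frac{4}{(\sqrt\lambda+\sqrt\Lambda)^2}$, $\beta=\big(\frac{\sqrt\Lambda-\sqrt\lambda}{\sqrt\Lambda+\sqrt\lambda}\big)^2$, and for $i\in\{1,\dots,d\}$ let $X^{(i)}_{\mu,\beta}=\begin{bmatrix}1+\beta-\mu\gamma_i & -\beta\\ 1 & 0\end{bmatrix}$. Then $$\max_{i\in\{1,\dots,d\}}\frac{\|X^{(i)}_{\mu,\beta}\|_2^2}{\|(X^{(i)}_{\mu,\beta})^2\|_2}\leqslant\frac1\beta\,(1+4\beta+\beta^2).$$ *)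

theory Defs
  imports "HOL-Analysis.Analysis"
begin

definition mat_eigenvalue :: "real^'n^'n \<Rightarrow> real \<Rightarrow> bool" where
  "mat_eigenvalue A g \<longleftrightarrow> (\<exists>v. v \<noteq> 0 \<and> A *v v = g *\<^sub>R v)"

definition pos_def :: "real^'n^'n \<Rightarrow> bool" where
  "pos_def A \<longleftrightarrow> transpose A = A \<and> (\<forall>x. x \<noteq> 0 \<longrightarrow> x \<bullet> (A *v x) > 0)"

definition spec_norm :: "real^'n^'m \<Rightarrow> real" where
  "spec_norm A = onorm (\<lambda>v. A *v v)"

definition iter_mat :: "real \<Rightarrow> real \<Rightarrow> real \<Rightarrow> real^2^2" where
  "iter_mat mu beta g = vector [vector [1 + beta - mu * g, - beta], vector [1, 0]]"

end

theory Submission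
  imports Defs
begin

lemma n2: "(norm (x::real^2))^2 = (x$1)^2 + (x$2)^2"
  by (subst power2_norm_eq_inner) (simp add: inner_vec_def sum_2 power2_eq_square)
lemma mv: "(iter_mat mu b g *v v) $ 1 = (1+b-mu*g) * v$1 - b * v$2"
          "(iter_mat mu b g *v v) $ 2 = v$1"
  by (simp_all add: iter_mat_def matrix_vector_mult_def sum_2)
lemma upper: "(spec_norm (iter_mat mu b g))^2 \<le> (1+b-mu*g)^2 + b^2 + 1"
proof -
  define a where "a = 1+b-mu*g"
  have "norm (iter_mat mu b g *v v) \<le> sqrt (a^2+b^2+1) * norm v" for v
  proof -
    have "(norm (iter_mat mu b g *v v))^2 = (a * v$1 - b * v$2)^2 + (v$1)^2"
      by (simp add: n2 mv a_def)
    also have "\<dots> \<le> (a^2+b^2+1) * ((v$1)^2 + (v$2)^2)"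
    proof -
      have "(a^2+b^2+1) * ((v$1)^2 + (v$2)^2) - ((a * v$1 - b * v$2)^2 + (v$1)^2) = (a * v$2 + b * v$1)^2 + (v$2)^2"
        by (simp add: algebra_simps power2_eq_square)
      moreover have "0 \<le> (a * v$2 + b * v$1)^2 + (v$2)^2" by simp
      ultimately show ?thesis by linarith
    qed
    also have "\<dots> = (sqrt (a^2+b^2+1) * norm v)^2"
      by (simp add: power_mult_distrib n2)
    finally show ?thesis
      by (meson norm_ge_zero power2_le_imp_le real_sqrt_ge_zero mult_nonneg_nonneg add_nonneg_nonneg zero_le_one zero_le_power2)
  qed
  hence "spec_norm (iter_mat mu b g) \<le> sqrt (a^2+b^2+1)"
    unfolding spec_norm_def by (intro onorm_le) auto
  moreover have "0 \<le> spec_norm (iter_mat mu b g)"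
    unfolding spec_norm_def by (intro onorm_pos_le) simp
  ultimately show ?thesis unfolding a_def
    by (metis add_nonneg_nonneg power_mono real_sqrt_pow2 zero_le_one zero_le_power2)
qed
lemma lower: "\<bar>b\<bar> \<le> spec_norm (iter_mat mu b g ** iter_mat mu b g)"
proof -
  let ?M = "iter_mat mu b g"
  let ?v = "axis 2 (1::real) :: real^2"
  have "\<bar>b\<bar> = \<bar>((?M ** ?M) *v ?v) $ 2\<bar>"
    by (simp add: matrix_vector_mul_assoc[symmetric] mv axis_def)
  also have "\<dots> \<le> norm ((?M ** ?M) *v ?v)" by (rule component_le_norm_cart)
  also have "\<dots> \<le> spec_norm (?M ** ?M) * norm ?v"
    unfolding spec_norm_def by (rule onorm) simp
  finally show ?thesis by simp
qed
lemma zero: "spec_norm (iter_mat mu 0 g ** iter_mat mu 0 g) = 0" if "1 - mu*g = 0"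
proof -
  have "(iter_mat mu 0 g ** iter_mat mu 0 g) *v v = 0" for v
    using that by (simp add: matrix_vector_mul_assoc[symmetric] mv vec_eq_iff forall_2)
  hence "(\<lambda>v. (iter_mat mu 0 g ** iter_mat mu 0 g) *v v) = (\<lambda>v. 0)" by auto
  thus ?thesis unfolding spec_norm_def by (simp add: onorm_zero)
qed

lemma a_bound:
  assumes "0 < lam" "lam \<le> g" "g \<le> Lam"
  shows "(1 + ((sqrt Lam - sqrt lam) / (sqrt Lam + sqrt lam))^2 - 4 / (sqrt lam + sqrt Lam)^2 * g)^2
         \<le> 4 * ((sqrt Lam - sqrt lam) / (sqrt Lam + sqrt lam))^2"
proof -
  define s where "s = sqrt lam"
  define t where "t = sqrt Lam"
  have s0: "0 < s" using assms s_def by simp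
  have st: "s \<le> t" using assms unfolding s_def t_def by simp
  have gs: "s^2 \<le> g" "g \<le> t^2" using assms s_def t_def by simp_all
  define p where "p = s + t"
  have p0: "0 < p" using s0 st p_def by simp
  have aeq: "1 + ((t - s) / (t + s))^2 - 4 / (s + t)^2 * g = (2* s^2 + 2*t^2 - 4*g) / p^2"
  proof -
    have e: "t + s = p" "s + t = p" by (simp_all add: p_def)
    have id: "p^2 + (t-s)^2 = 2 * s^2 + 2*t^2" by (simp add: p_def power2_eq_square algebra_simps)
    have "1 + ((t - s) / p)^2 - 4 / p^2 * g = (p^2 + (t-s)^2 - 4*g) / p^2"
      using p0 by (simp add: power_divide field_simps)
    thus ?thesis unfolding e id .
  qed
  have hh: "\<bar>2* s^2 + 2*t^2 - 4*g\<bar> \<le> 2*(t-s)*p"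
  proof -
    have "2*(t-s)*p = 2*t^2 - 2 * s^2" by (simp add: p_def power2_eq_square algebra_simps)
    thus ?thesis using gs unfolding abs_le_iff by linarith
  qed
  have "\<bar>(2* s^2 + 2*t^2 - 4*g) / p^2\<bar> \<le> 2*(t-s)*p / p^2"
  proof -
    have "\<bar>(2 * s^2 + 2*t^2 - 4*g) / p^2\<bar> = \<bar>2 * s^2 + 2*t^2 - 4*g\<bar> / p^2"
      by (simp add: abs_divide)
    thus ?thesis using divide_right_mono[OF hh, of "p^2"] by simp
  qed
  also have "\<dots> = 2*((t-s)/p)" using p0 by (simp add: power2_eq_square)
  finally have h: "\<bar>(2* s^2 + 2*t^2 - 4*g) / p^2\<bar> \<le> 2*((t-s)/p)" .
  have "((2* s^2 + 2*t^2 - 4*g) / p^2)^2 \<le> (2*((t-s)/p))^2"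
    using h by (metis abs_ge_zero power2_abs power_mono)
  also have "\<dots> = 4 * ((t-s)/(t+s))^2" 
  proof -
    have e2: "t + s = p" by (simp add: p_def)
    show ?thesis unfolding e2 power_mult_distrib by simp
  qed
  finally have "(1 + ((t - s) / (t + s))^2 - 4 / (s + t)^2 * g)^2 \<le> 4 * ((t-s)/(t+s))^2"
    unfolding aeq .
  thus ?thesis unfolding s_def t_def .
qed

theorem lemmaA4:
  fixes X :: "real^'d^'d" and lam Lam :: real
  assumes "pos_def X"
    and "0 < lam" and "lam \<le> Lam"
    and "\<And>g. mat_eigenvalue X g \<Longrightarrow> lam \<le> g \<and> g \<le> Lam"
  shows "let mu = 4 / (sqrt lam + sqrt Lam)^2;
             beta = ((sqrt Lam - sqrt lam) / (sqrt Lam + sqrt lam))^2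
         in \<forall>g. mat_eigenvalue X g \<longrightarrow>
              (spec_norm (iter_mat mu beta g))^2 / spec_norm (iter_mat mu beta g ** iter_mat mu beta g)
                \<le> (1 / beta) * (1 + 4 * beta + beta^2)"
  unfolding Let_def
proof (intro allI impI)
  fix g assume "mat_eigenvalue X g"
  hence g: "lam \<le> g" "g \<le> Lam" using assms(4) by auto
  define mu where "mu = 4 / (sqrt lam + sqrt Lam)^2"
  define beta where "beta = ((sqrt Lam - sqrt lam) / (sqrt Lam + sqrt lam))^2"
  have ab: "(1 + beta - mu * g)^2 \<le> 4 * beta"
    using a_bound[OF assms(2) g] unfolding mu_def beta_def .
  have b0: "0 \<le> beta" unfolding beta_def by simp
  show "(spec_norm (iter_mat mu beta g))^2 / spec_norm (iter_mat mu beta g ** iter_mat mu beta g)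
                \<le> (1 / beta) * (1 + 4 * beta + beta^2)"
  proof (cases "beta = 0")
    case True
    with ab have "1 - mu * g = 0" by simp
    from zero[OF this] True show ?thesis by simp
  next
    case False
    hence bp: "0 < beta" using b0 by simp
    have "(spec_norm (iter_mat mu beta g))^2 / spec_norm (iter_mat mu beta g ** iter_mat mu beta g)
          \<le> (1 + 4 * beta + beta^2) / beta"
    proof (rule frac_le)
      show "0 \<le> 1 + 4 * beta + beta^2" using b0 by simp
      show "(spec_norm (iter_mat mu beta g))^2 \<le> 1 + 4 * beta + beta^2"
        using upper[of mu beta g] ab by simp
      show "0 < beta" by fact
      show "beta \<le> spec_norm (iter_mat mu beta g ** iter_mat mu beta g)"
        using lower[of beta mu g] b0 by simp
    qed
    thus ?thesis by simp
  qed
qed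
end
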